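(* Let $\mathbb{J}=\mathbb{N}\times(\mathbb{N}\cup\{\omega\})$ with the order $(j,k)\le(m,n)$ iff either ($j=m$ and $k\le n$) or ($n=\omega$ and $k\le m$), where $\mathbb{N}\cup\{\omega\}$ is ordered with $\omega$ above all naturals. Then $\mathbb{J}$ is a dcpo, its Scott space $\Sigma\mathbb{J}$ is coherent and $S^{\ast}$-well-filtered, but $\Sigma\mathbb{J}$ is not a strong $d$-space and hence not strongly well-filtered.
   Context: $\Sigma P$ is a poset $P$ with its Scott topology (a set $U$ is Scott open if $U={\uparrow}U$ and every directed $D$ with existing supremum $\bigvee D\in U$ meets $U$). For a space $X$, ${\uparrow}$ is taken in the specialization order ($x\le y$ iff $x\in cl\{y\}$); $K(X)$ is the set of nonempty compact saturated (= upper) subsets; a family in $K(X)$ is filtered if any two members contain a common member. $X$ is coherent if the intersection of two compact saturated sets is compact. $X$ is a strong $d$-space if for every directed $D\subseteq X$, $x\in X$ and open $U$, $\bigcap_{d\in D}{\uparrow}d\cap{\uparrow}x\subseteq U$ implies ${\uparrow}d\cap{\uparrow}x\subseteq U$ for some $d\in D$. $X$ is strongly well-filtered if for every filtered $\{K_i\}\subseteq K(X)$, $G\in K(X)$ and open $U$, $\bigcap_i K_i\cap G\subseteq U$ implies $K_i\cap G\subseteq U$ for some $i$; $X$ is $S^{\ast}$-well-filtered if the same holds for all nonempty open $U$. *)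

theory Defs
  imports "HOL-Analysis.Analysis" "HOL-Library.Extended_Nat"
begin

definition directed_rel :: "('a \<Rightarrow> 'a \<Rightarrow> bool) \<Rightarrow> 'a set \<Rightarrow> bool" where
  "directed_rel le D \<longleftrightarrow> D \<noteq> {} \<and> (\<forall>x\<in>D. \<forall>y\<in>D. \<exists>z\<in>D. le x z \<and> le y z)"

definition is_sup_rel :: "('a \<Rightarrow> 'a \<Rightarrow> bool) \<Rightarrow> 'a set \<Rightarrow> 'a \<Rightarrow> bool" where
  "is_sup_rel le D s \<longleftrightarrow> (\<forall>d\<in>D. le d s) \<and> (\<forall>u. (\<forall>d\<in>D. le d u) \<longrightarrow> le s u)"

definition is_dcpo :: "('a \<Rightarrow> 'a \<Rightarrow> bool) \<Rightarrow> bool" where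
  "is_dcpo le \<longleftrightarrow> partial_order_on UNIV {(x, y). le x y}
     \<and> (\<forall>D. directed_rel le D \<longrightarrow> (\<exists>s. is_sup_rel le D s))"

definition scott_open :: "('a \<Rightarrow> 'a \<Rightarrow> bool) \<Rightarrow> 'a set \<Rightarrow> bool" where
  "scott_open le U \<longleftrightarrow> (\<forall>x y. x \<in> U \<and> le x y \<longrightarrow> y \<in> U)
     \<and> (\<forall>D s. directed_rel le D \<and> is_sup_rel le D s \<and> s \<in> U \<longrightarrow> D \<inter> U \<noteq> {})"

definition scott_topology :: "('a \<Rightarrow> 'a \<Rightarrow> bool) \<Rightarrow> 'a topology" where
  "scott_topology le = topology (scott_open le)"

definition spec_le :: "'a topology \<Rightarrow> 'a \<Rightarrow> 'a \<Rightarrow> bool" where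
  "spec_le X x y \<longleftrightarrow> x \<in> topspace X \<and> y \<in> topspace X \<and> x \<in> X closure_of {y}"

definition upset :: "'a topology \<Rightarrow> 'a set \<Rightarrow> 'a set" where
  "upset X A = {y \<in> topspace X. \<exists>x\<in>A. spec_le X x y}"

definition saturated :: "'a topology \<Rightarrow> 'a set \<Rightarrow> bool" where
  "saturated X A \<longleftrightarrow> A \<subseteq> topspace X \<and> upset X A = A"

definition Kset :: "'a topology \<Rightarrow> 'a set set" where
  "Kset X = {K. K \<noteq> {} \<and> compactin X K \<and> saturated X K}"

definition filtered_family :: "'a set set \<Rightarrow> bool" where
  "filtered_family \<K> \<longleftrightarrow> \<K> \<noteq> {} \<and> (\<forall>K1\<in>\<K>. \<forall>K2\<in>\<K>. \<exists>K3\<in>\<K>. K3 \<subseteq> K1 \<inter> K2)"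

definition coherent_space :: "'a topology \<Rightarrow> bool" where
  "coherent_space X \<longleftrightarrow> (\<forall>K L. compactin X K \<and> saturated X K \<and> compactin X L \<and> saturated X L
      \<longrightarrow> compactin X (K \<inter> L))"

definition strong_d_space :: "'a topology \<Rightarrow> bool" where
  "strong_d_space X \<longleftrightarrow> (\<forall>D x U. D \<subseteq> topspace X \<and> directed_rel (spec_le X) D \<and> x \<in> topspace X
      \<and> openin X U \<and> (\<Inter>d\<in>D. upset X {d}) \<inter> upset X {x} \<subseteq> U
      \<longrightarrow> (\<exists>d\<in>D. upset X {d} \<inter> upset X {x} \<subseteq> U))"

definition strongly_well_filtered :: "'a topology \<Rightarrow> bool" where
  "strongly_well_filtered X \<longleftrightarrow> (\<forall>\<K> G U. \<K> \<subseteq> Kset X \<and> filtered_family \<K> \<and> G \<in> Kset X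
      \<and> openin X U \<and> \<Inter>\<K> \<inter> G \<subseteq> U \<longrightarrow> (\<exists>K\<in>\<K>. K \<inter> G \<subseteq> U))"

definition S_star_well_filtered :: "'a topology \<Rightarrow> bool" where
  "S_star_well_filtered X \<longleftrightarrow> (\<forall>\<K> G U. \<K> \<subseteq> Kset X \<and> filtered_family \<K> \<and> G \<in> Kset X
      \<and> openin X U \<and> U \<noteq> {} \<and> \<Inter>\<K> \<inter> G \<subseteq> U \<longrightarrow> (\<exists>K\<in>\<K>. K \<inter> G \<subseteq> U))"

section \<open>The poset J = N \<times> (N \<union> {\<omega>}); \<omega> is \<infinity> :: enat\<close>

definition J_le :: "nat \<times> enat \<Rightarrow> nat \<times> enat \<Rightarrow> bool" where
  "J_le a b \<longleftrightarrow> (case a of (j, k) \<Rightarrow> case b of (m, n) \<Rightarrow>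
      (j = m \<and> k \<le> n) \<or> (n = \<infinity> \<and> k \<le> enat m))"

end

theory Submission
  imports Defs
begin

lemma J_le_simp[simp]: "J_le (a,b) (c,d) \<longleftrightarrow> (a=c \<and> b\<le>d) \<or> (d=\<infinity> \<and> b \<le> enat c)"
  by (simp add: J_le_def)

lemma J_refl: "J_le p p" by (cases p) auto

lemma J_trans: "J_le p q \<Longrightarrow> J_le q r \<Longrightarrow> J_le p r"
  apply (cases p; cases q; cases r)
  apply simp
  apply (elim disjE conjE)
  apply simp_all
  using order_trans apply blast
  using order_trans apply blast
  done

lemma J_antisym: "J_le p q \<Longrightarrow> J_le q p \<Longrightarrow> p = q"
  by (cases p; cases q) auto

lemma J_max: "J_le (m,\<infinity>) z \<Longrightarrow> z = (m,\<infinity>)"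
  by (cases z) auto

lemma J_fin: "J_le p (m, enat n) \<Longrightarrow> fst p = m"
  by (cases p) auto

lemma J_unb:
  assumes "\<forall>k. \<exists>k'\<ge>k. J_le (j,enat k') (m,n)"
  shows "m = j \<and> n = \<infinity>"
proof -
  have n: "n = \<infinity>"
  proof (cases n)
    case (enat N)
    from assms obtain k' where "k' \<ge> Suc N" "J_le (j,enat k') (m,n)" by blast
    then show ?thesis using enat by auto
  qed simp
  from assms obtain k' where "k' \<ge> Suc m" "J_le (j,enat k') (m,n)" by blast
  then show ?thesis using n by auto
qed

lemma istop_scott: "istopology (scott_open le)"
  unfolding istopology_def
proof (intro conjI allI impI)
  fix S T assume S: "scott_open le S" and T: "scott_open le T"
  show "scott_open le (S \<inter> T)"
    unfolding scott_open_def
  proof (intro conjI allI impI)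
    fix x y assume "x \<in> S \<inter> T \<and> le x y" then show "y \<in> S \<inter> T"
      using S T unfolding scott_open_def by blast
  next
    fix D s assume a: "directed_rel le D \<and> is_sup_rel le D s \<and> s \<in> S \<inter> T"
    then obtain d1 where d1: "d1 \<in> D" "d1 \<in> S" using S unfolding scott_open_def by blast
    obtain d2 where d2: "d2 \<in> D" "d2 \<in> T" using a T unfolding scott_open_def by blast
    obtain d3 where "d3 \<in> D" "le d1 d3" "le d2 d3" using a d1 d2 unfolding directed_rel_def by blast
    then show "D \<inter> (S \<inter> T) \<noteq> {}" using d1 d2 S T unfolding scott_open_def by blast
  qed
next
  fix K assume K: "\<forall>S\<in>K. scott_open le S"
  show "scott_open le (\<Union>K)" unfolding scott_open_def
  proof (intro conjI allI impI)
    fix x y assume "x \<in> \<Union>K \<and> le x y" then show "y \<in> \<Union>K"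
      using K unfolding scott_open_def by blast
  next
    fix D s assume a: "directed_rel le D \<and> is_sup_rel le D s \<and> s \<in> \<Union>K"
    then obtain S where "S \<in> K" "s \<in> S" by blast
    then show "D \<inter> \<Union>K \<noteq> {}" using a K unfolding scott_open_def by blast
  qed
qed

lemma openin_scott: "openin (scott_topology le) = scott_open le"
  by (simp add: scott_topology_def istop_scott)

lemma topspace_scott: "topspace (scott_topology le) = UNIV"
proof -
  have "scott_open le UNIV" unfolding scott_open_def directed_rel_def by auto
  then show ?thesis unfolding topspace_def openin_scott by auto
qed

lemma spec_scott:
  assumes refl: "\<And>x. le x x" and trans: "\<And>x y z. le x y \<Longrightarrow> le y z \<Longrightarrow> le x z"
  shows "spec_le (scott_topology le) = le"
proof (intro ext)
  fix x y
  show "spec_le (scott_topology le) x y = le x y"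
  proof
    assume "spec_le (scott_topology le) x y"
    then have c: "\<forall>T. x \<in> T \<and> scott_open le T \<longrightarrow> y \<in> T"
      unfolding spec_le_def in_closure_of openin_scott by auto
    have so: "scott_open le {z. \<not> le z y}" unfolding scott_open_def
    proof (intro conjI allI impI)
      fix a b assume "a \<in> {z. \<not> le z y} \<and> le a b" then show "b \<in> {z. \<not> le z y}"
        using trans[of a b y] by auto
    next
      fix D s assume a: "directed_rel le D \<and> is_sup_rel le D s \<and> s \<in> {z. \<not> le z y}"
      show "D \<inter> {z. \<not> le z y} \<noteq> {}"
      proof
        assume "D \<inter> {z. \<not> le z y} = {}"
        then have "\<forall>d\<in>D. le d y" by blast
        then have "le s y" using a unfolding is_sup_rel_def by blast
        moreover have "\<not> le s y" using a by blast
        ultimately show False by blast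
      qed
    qed
    show "le x y"
    proof (rule ccontr)
      assume "\<not> le x y"
      then have "y \<in> {z. \<not> le z y}" using c[rule_format, of "{z. \<not> le z y}"] so by auto
      then show False using refl[of y] by simp
    qed
  next
    assume xy: "le x y"
    have "\<forall>T. x \<in> T \<and> scott_open le T \<longrightarrow> y \<in> T"
    proof (intro allI impI)
      fix T assume "x \<in> T \<and> scott_open le T"
      then have "x \<in> T" "\<forall>x y. x \<in> T \<and> le x y \<longrightarrow> y \<in> T" unfolding scott_open_def by auto
      then show "y \<in> T" using xy by blast
    qed
    then show "spec_le (scott_topology le) x y"
      unfolding spec_le_def in_closure_of openin_scott topspace_scott by auto
  qed
qed

abbreviation "SJ \<equiv> scott_topology J_le"

lemma spec_J: "spec_le SJ = J_le"
  by (rule spec_scott[of J_le, OF J_refl J_trans])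

lemma upset_J: "upset SJ A = {y. \<exists>x\<in>A. J_le x y}"
  unfolding upset_def spec_J topspace_scott by auto

lemma saturated_J: "saturated SJ K \<longleftrightarrow> (\<forall>x y. x \<in> K \<and> J_le x y \<longrightarrow> y \<in> K)"
proof -
  have "K \<subseteq> {y. \<exists>x\<in>K. J_le x y}" using J_refl by blast
  then show ?thesis unfolding saturated_def upset_J topspace_scott by blast
qed

lemma dir_analysis:
  assumes D: "directed_rel J_le D"
  shows "(\<exists>m\<in>D. \<forall>d\<in>D. J_le d m) \<or>
         (\<exists>j. (\<forall>d\<in>D. J_le d (j,\<infinity>)) \<and> (\<forall>k. \<exists>k'\<ge>k. (j, enat k') \<in> D))"
proof (cases "\<exists>m\<in>D. \<forall>d\<in>D. J_le d m")
  case True then show ?thesis by blast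
next
  case False
  then have nomax: "\<not> (\<exists>m\<in>D. \<forall>d\<in>D. J_le d m)" by blast
  have fin: "snd d \<noteq> \<infinity>" if "d \<in> D" for d
  proof
    assume inf: "snd d = \<infinity>"
    have "J_le d' d" if "d' \<in> D" for d'
    proof -
      obtain z where z: "z \<in> D" "J_le d' z" "J_le d z" using D \<open>d \<in> D\<close> \<open>d' \<in> D\<close>
        unfolding directed_rel_def by blast
      have "z = d" using J_max[of "fst d" z] z(3) inf by (cases d) auto
      then show ?thesis using z by simp
    qed
    then show False using nomax \<open>d \<in> D\<close> by blast
  qed
  obtain d0 where d0: "d0 \<in> D" using D unfolding directed_rel_def by blast
  define j where "j = fst d0"
  have col: "\<exists>k. d = (j, enat k)" if dD: "d \<in> D" for d
  proof -
    obtain z where z: "z \<in> D" "J_le d0 z" "J_le d z" using D \<open>d \<in> D\<close> d0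
      unfolding directed_rel_def by blast
    obtain k where zk: "snd z = enat k" using fin[OF z(1)] by (cases "snd z") auto
    have "fst d0 = fst z" "fst d = fst z" using J_fin[of _ "fst z" k] z zk
      by (metis prod.collapse)+
    moreover obtain kd where "snd d = enat kd" using fin[OF dD] by (cases "snd d") auto
    ultimately show ?thesis unfolding j_def by (metis prod.collapse)
  qed
  have unb: "\<forall>k. \<exists>k'\<ge>k. (j, enat k') \<in> D"
  proof (rule ccontr)
    assume "\<not> (\<forall>k. \<exists>k'\<ge>k. (j, enat k') \<in> D)"
    then obtain k where k: "\<forall>k'. (j, enat k') \<in> D \<longrightarrow> k' < k" by (meson not_le)
    define S where "S = {k'. (j, enat k') \<in> D}"
    have "S \<subseteq> {..<k}" using k S_def by auto
    then have fS: "finite S" using finite_subset by blast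
    have "S \<noteq> {}" using col[OF d0] unfolding S_def using d0 by auto
    then have MS: "Max S \<in> S" using fS by simp
    have "\<forall>d\<in>D. J_le d (j, enat (Max S))"
    proof
      fix d assume "d \<in> D"
      then obtain k' where "d = (j, enat k')" using col by blast
      then have "k' \<in> S" using \<open>d \<in> D\<close> S_def by simp
      then have "k' \<le> Max S" using fS by simp
      then show "J_le d (j, enat (Max S))" using \<open>d = (j, enat k')\<close> by simp
    qed
    then show False using nomax MS S_def by blast
  qed
  have "\<forall>d\<in>D. J_le d (j,\<infinity>)" using col by fastforce
  then show ?thesis using unb by blast
qed

lemma sup_analysis:
  assumes D: "directed_rel J_le D" and s: "is_sup_rel J_le D s"
  shows "s \<in> D \<or> (\<exists>j. s = (j,\<infinity>) \<and> (\<forall>k. \<exists>k'\<ge>k. (j, enat k') \<in> D))"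
  using dir_analysis[OF D]
proof
  assume "\<exists>m\<in>D. \<forall>d\<in>D. J_le d m"
  then obtain m where m: "m \<in> D" "\<forall>d\<in>D. J_le d m" by blast
  have "J_le s m" using s m(2) unfolding is_sup_rel_def by blast
  moreover have "J_le m s" using s m(1) unfolding is_sup_rel_def by blast
  ultimately show ?thesis using J_antisym m by blast
next
  assume "\<exists>j. (\<forall>d\<in>D. J_le d (j,\<infinity>)) \<and> (\<forall>k. \<exists>k'\<ge>k. (j, enat k') \<in> D)"
  then obtain j where j: "\<forall>k. \<exists>k'\<ge>k. (j, enat k') \<in> D" by blast
  have "\<forall>d\<in>D. J_le d s" using s unfolding is_sup_rel_def by blast
  then have "\<forall>k. \<exists>k'\<ge>k. J_le (j, enat k') (fst s, snd s)" using j by fastforce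
  then have "fst s = j \<and> snd s = \<infinity>" by (rule J_unb)
  then show ?thesis using j by (metis prod.collapse)
qed

lemma col_dir: "directed_rel J_le (range (\<lambda>k. (j, enat k)))"
  unfolding directed_rel_def
proof (intro conjI ballI)
  fix x y assume "x \<in> range (\<lambda>k. (j, enat k))" "y \<in> range (\<lambda>k. (j, enat k))"
  then obtain a b where "x = (j, enat a)" "y = (j, enat b)" by blast
  then show "\<exists>z\<in>range (\<lambda>k. (j, enat k)). J_le x z \<and> J_le y z"
    by (intro bexI[of _ "(j, enat (max a b))"]) auto
qed auto

lemma col_sup: "is_sup_rel J_le (range (\<lambda>k. (j, enat k))) (j,\<infinity>)"
  unfolding is_sup_rel_def
proof (intro conjI allI impI ballI)
  fix u assume "\<forall>d\<in>range (\<lambda>k. (j, enat k)). J_le d u"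
  then have "\<forall>k. \<exists>k'\<ge>k. J_le (j, enat k') (fst u, snd u)" by auto
  then have "fst u = j \<and> snd u = \<infinity>" by (rule J_unb)
  then show "J_le (j, \<infinity>) u" by (metis J_refl prod.collapse)
qed auto

lemma open_J: "openin SJ U \<longleftrightarrow>
   (\<forall>x y. x \<in> U \<and> J_le x y \<longrightarrow> y \<in> U) \<and> (\<forall>j. (j,\<infinity>) \<in> U \<longrightarrow> (\<exists>k. (j, enat k) \<in> U))"
  unfolding openin_scott
proof
  assume so: "scott_open J_le U"
  show "(\<forall>x y. x \<in> U \<and> J_le x y \<longrightarrow> y \<in> U) \<and> (\<forall>j. (j,\<infinity>) \<in> U \<longrightarrow> (\<exists>k. (j, enat k) \<in> U))"
  proof (intro conjI allI impI)
    fix x y assume "x \<in> U \<and> J_le x y" then show "y \<in> U" using so unfolding scott_open_def by blast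
  next
    fix j assume "(j,\<infinity>) \<in> U"
    then have "range (\<lambda>k. (j, enat k)) \<inter> U \<noteq> {}"
      using so col_dir[of j] col_sup[of j] unfolding scott_open_def by blast
    then show "\<exists>k. (j, enat k) \<in> U" by blast
  qed
next
  assume a: "(\<forall>x y. x \<in> U \<and> J_le x y \<longrightarrow> y \<in> U) \<and> (\<forall>j. (j,\<infinity>) \<in> U \<longrightarrow> (\<exists>k. (j, enat k) \<in> U))"
  show "scott_open J_le U" unfolding scott_open_def
  proof (intro conjI allI impI)
    fix x y assume "x \<in> U \<and> J_le x y" then show "y \<in> U" using a by blast
  next
    fix D s assume b: "directed_rel J_le D \<and> is_sup_rel J_le D s \<and> s \<in> U"
    show "D \<inter> U \<noteq> {}"
    proof (cases "s \<in> D")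
      case True then show ?thesis using b by blast
    next
      case False
      then obtain j where j: "s = (j,\<infinity>)" "\<forall>k. \<exists>k'\<ge>k. (j, enat k') \<in> D"
        using sup_analysis b by blast
      obtain k where "(j, enat k) \<in> U" using a b j by blast
      moreover obtain k' where "k' \<ge> k" "(j, enat k') \<in> D" using j by blast
      ultimately have "(j, enat k') \<in> U" using a by (metis J_le_simp enat_ord_simps(1))
      then show ?thesis using \<open>(j, enat k') \<in> D\<close> by blast
    qed
  qed
qed

lemma open_upper: "openin SJ U \<Longrightarrow> x \<in> U \<Longrightarrow> J_le x y \<Longrightarrow> y \<in> U"
  using open_J by blast

lemma open_ne_max:
  assumes "openin SJ U" "U \<noteq> {}"
  obtains n0 where "\<forall>m\<ge>n0. (m,\<infinity>) \<in> U"
proof -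
  obtain p where p: "p \<in> U" using assms by blast
  obtain j k where jk: "(j, enat k) \<in> U"
  proof (cases "snd p")
    case (enat k) then show ?thesis using that p by (metis prod.collapse)
  next
    case infinity then show ?thesis using that p assms(1) open_J by (metis prod.collapse)
  qed
  have "\<forall>m\<ge>k. (m,\<infinity>) \<in> U" using open_upper[OF assms(1) jk] by simp
  then show ?thesis using that by blast
qed

definition finc :: "(nat \<times> enat) set \<Rightarrow> nat set" where
  "finc K = {j. \<exists>k. (j, enat k) \<in> K}"

lemma compact_if:
  assumes up: "\<And>x y. x \<in> K \<Longrightarrow> J_le x y \<Longrightarrow> y \<in> K" and fin: "finite (finc K)"
  shows "compactin SJ K"
  unfolding compactin_def topspace_scott
proof (intro conjI allI impI)
  fix \<U> assume a: "(\<forall>U\<in>\<U>. openin SJ U) \<and> K \<subseteq> \<Union>\<U>"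
  show "\<exists>\<F>. finite \<F> \<and> \<F> \<subseteq> \<U> \<and> K \<subseteq> \<Union>\<F>"
  proof (cases "K = {}")
    case True then show ?thesis by blast
  next
    case False
    then obtain p0 where p0: "p0 \<in> K" by blast
    have "\<forall>p\<in>K. \<exists>B. B \<in> \<U> \<and> p \<in> B" using a by blast
    then obtain Bf where Bf: "\<forall>p\<in>K. Bf p \<in> \<U> \<and> p \<in> Bf p" by metis
    have "openin SJ (Bf p0)" "Bf p0 \<noteq> {}" using Bf a p0 by auto
    then obtain n0 where n0: "\<forall>m\<ge>n0. (m,\<infinity>) \<in> Bf p0" by (rule open_ne_max)
    define km where "km j = (LEAST k. (j, enat k) \<in> K)" for j
    define P where "P = {p0} \<union> (\<lambda>j. (j, enat (km j))) ` finc K \<union> {p\<in>K. snd p = \<infinity> \<and> fst p < n0}"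
    have kmK: "(j, enat (km j)) \<in> K" if "j \<in> finc K" for j
      using that unfolding finc_def km_def by (auto intro: LeastI)
    have PK: "P \<subseteq> K" using p0 kmK unfolding P_def by auto
    have "{p\<in>K. snd p = \<infinity> \<and> fst p < n0} \<subseteq> (\<lambda>m. (m,\<infinity>)) ` {..<n0}"
      by (auto simp: image_iff)
    then have "finite {p\<in>K. snd p = \<infinity> \<and> fst p < n0}" by (rule finite_subset) simp
    then have fP: "finite P" unfolding P_def using fin by simp
    show ?thesis
    proof (intro exI conjI)
      show "finite (Bf ` P)" using fP by simp
      show "Bf ` P \<subseteq> \<U>" using PK Bf by auto
      show "K \<subseteq> \<Union> (Bf ` P)"
      proof
        fix x assume xK: "x \<in> K"
        obtain a b where x: "x = (a,b)" by fastforce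
        show "x \<in> \<Union> (Bf ` P)"
        proof (cases b)
          case (enat k)
          then have aK: "a \<in> finc K" using xK x unfolding finc_def by auto
          then have "km a \<le> k" unfolding km_def using xK x enat by (auto intro: Least_le)
          then have "J_le (a, enat (km a)) x" using x enat by simp
          moreover have "(a, enat (km a)) \<in> P" using aK unfolding P_def by auto
          moreover have "openin SJ (Bf (a, enat (km a)))" "(a, enat (km a)) \<in> Bf (a, enat (km a))"
            using Bf kmK[OF aK] a by auto
          ultimately show ?thesis using open_upper by blast
        next
          case infinity
          show ?thesis
          proof (cases "a < n0")
            case True
            then have "x \<in> P" unfolding P_def using xK x infinity by auto
            then show ?thesis using Bf PK by blast
          next
            case False
            then have "x \<in> Bf p0" using n0 x infinity by auto
            then show ?thesis unfolding P_def by blast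
          qed
        qed
      qed
    qed
  qed
qed simp

lemma compact_only_if:
  assumes up: "\<And>x y. x \<in> K \<Longrightarrow> J_le x y \<Longrightarrow> y \<in> K" and c: "compactin SJ K"
  shows "finite (finc K)"
proof (rule ccontr)
  assume inf: "infinite (finc K)"
  define km where "km j = (LEAST k. (j, enat k) \<in> K)" for j
  have kmK: "(j, enat (km j)) \<in> K" if "j \<in> finc K" for j
    using that unfolding finc_def km_def by (auto intro: LeastI)
  define h where "h m = (if m \<in> finc K then Suc (km m) else 0)" for m
  define W where "W j = {p. (fst p = j \<and> enat (km j) \<le> snd p) \<or> enat (h (fst p)) \<le> snd p}" for j
  have Wopen: "openin SJ (W j)" for j
    unfolding open_J
  proof (intro conjI allI impI)
    fix x y assume "x \<in> W j \<and> J_le x y"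
    then show "y \<in> W j" unfolding W_def
      by (cases x; cases y) (auto intro: order_trans)
  next
    fix m assume "(m, \<infinity>) \<in> W j"
    show "\<exists>k. (m, enat k) \<in> W j" by (rule exI[of _ "h m"]) (simp add: W_def)
  qed
  have cov: "K \<subseteq> \<Union> (W ` finc K)"
  proof
    fix x assume xK: "x \<in> K"
    obtain a b where x: "x = (a,b)" by fastforce
    show "x \<in> \<Union> (W ` finc K)"
    proof (cases b)
      case (enat k)
      then have aK: "a \<in> finc K" using xK x unfolding finc_def by auto
      then have "km a \<le> k" unfolding km_def using xK x enat by (auto intro: Least_le)
      then have "x \<in> W a" unfolding W_def using x enat by simp
      then show ?thesis using aK by blast
    next
      case infinity
      obtain j where "j \<in> finc K" using inf by (metis finite.emptyI ex_in_conv)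
      moreover have "x \<in> W j" unfolding W_def using x infinity by simp
      ultimately show ?thesis by blast
    qed
  qed
  obtain \<F> where F: "finite \<F>" "\<F> \<subseteq> W ` finc K" "K \<subseteq> \<Union>\<F>"
    using c cov Wopen unfolding compactin_def by (metis imageE)
  then obtain J0 where J0: "J0 \<subseteq> finc K" "finite J0" "\<F> = W ` J0"
    by (meson finite_subset_image)
  obtain m where m: "m \<in> finc K" "m \<notin> J0" using inf J0
    by (metis finite_subset subsetI)
  have "(m, enat (km m)) \<in> K" using kmK m by blast
  then obtain j where "j \<in> J0" "(m, enat (km m)) \<in> W j" using F J0 by blast
  then show False unfolding W_def h_def using m by auto
qed

lemma Kset_J: "K \<in> Kset SJ \<longleftrightarrow> K \<noteq> {} \<and> (\<forall>x y. x \<in> K \<and> J_le x y \<longrightarrow> y \<in> K) \<and> finite (finc K)"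
  unfolding Kset_def saturated_J using compact_if compact_only_if by blast

lemma dcpo_J: "is_dcpo J_le"
  unfolding is_dcpo_def
proof (intro conjI allI impI)
  show "partial_order_on UNIV {(x, y). J_le x y}"
    unfolding partial_order_on_def preorder_on_def
  proof (intro conjI)
    show "refl_on UNIV {(x, y). J_le x y}" unfolding refl_on_def using J_refl by simp
    show "trans {(x, y). J_le x y}"
    proof (rule transI)
      fix x y z assume "(x, y) \<in> {(x, y). J_le x y}" "(y, z) \<in> {(x, y). J_le x y}"
      then have "J_le x y" "J_le y z" by auto
      then have "J_le x z" by (rule J_trans)
      then show "(x, z) \<in> {(x, y). J_le x y}" by simp
    qed
    show "antisym {(x, y). J_le x y}"
    proof (rule antisymI)
      fix x y assume "(x, y) \<in> {(x, y). J_le x y}" "(y, x) \<in> {(x, y). J_le x y}"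
      then have "J_le x y" "J_le y x" by auto
      then show "x = y" by (rule J_antisym)
    qed
  qed simp
next
  fix D assume D: "directed_rel J_le D"
  show "\<exists>s. is_sup_rel J_le D s"
    using dir_analysis[OF D]
  proof
    assume "\<exists>m\<in>D. \<forall>d\<in>D. J_le d m"
    then obtain m where "m \<in> D" "\<forall>d\<in>D. J_le d m" by blast
    then have "is_sup_rel J_le D m" unfolding is_sup_rel_def by blast
    then show ?thesis by blast
  next
    assume "\<exists>j. (\<forall>d\<in>D. J_le d (j,\<infinity>)) \<and> (\<forall>k. \<exists>k'\<ge>k. (j, enat k') \<in> D)"
    then obtain j where j: "\<forall>d\<in>D. J_le d (j,\<infinity>)" "\<forall>k. \<exists>k'\<ge>k. (j, enat k') \<in> D" by blast
    have "is_sup_rel J_le D (j,\<infinity>)" unfolding is_sup_rel_def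
    proof (intro conjI allI impI)
      fix u assume "\<forall>d\<in>D. J_le d u"
      then have "\<forall>k. \<exists>k'\<ge>k. J_le (j, enat k') (fst u, snd u)" using j(2) by fastforce
      then have "fst u = j \<and> snd u = \<infinity>" by (rule J_unb)
      then show "J_le (j, \<infinity>) u" by (metis J_refl prod.collapse)
    qed (use j in blast)
    then show ?thesis by blast
  qed
qed

lemma coherent_J: "coherent_space SJ"
  unfolding coherent_space_def
proof (intro allI impI)
  fix K L assume a: "compactin SJ K \<and> saturated SJ K \<and> compactin SJ L \<and> saturated SJ L"
  then have uK: "\<forall>x y. x \<in> K \<and> J_le x y \<longrightarrow> y \<in> K" and uL: "\<forall>x y. x \<in> L \<and> J_le x y \<longrightarrow> y \<in> L"
    unfolding saturated_J by blast+
  have "finite (finc K)" using compact_only_if[of K] uK a by blast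
  moreover have "finc (K \<inter> L) \<subseteq> finc K" unfolding finc_def by auto
  ultimately have "finite (finc (K \<inter> L))" using finite_subset by blast
  then show "compactin SJ (K \<inter> L)" using compact_if[of "K \<inter> L"] uK uL by blast
qed

lemma filtered_lower:
  assumes "filtered_family \<K>" "finite S" "S \<subseteq> \<K>"
  shows "\<exists>K\<in>\<K>. \<forall>K'\<in>S. K \<subseteq> K'"
  using assms(2,3)
proof (induction S rule: finite_induct)
  case empty then show ?case using assms(1) unfolding filtered_family_def by blast
next
  case (insert A S)
  then obtain K where K: "K \<in> \<K>" "\<forall>K'\<in>S. K \<subseteq> K'" by blast
  obtain K3 where "K3 \<in> \<K>" "K3 \<subseteq> K \<inter> A" using assms(1) K insert unfolding filtered_family_def by blast
  then show ?case using K by blast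
qed

lemma filtered_finite_meet:
  assumes "filtered_family \<K>" "finite B" "\<forall>K\<in>\<K>. \<exists>b\<in>B. b \<in> K"
  shows "\<exists>b\<in>B. \<forall>K\<in>\<K>. b \<in> K"
proof (rule ccontr)
  assume "\<not> (\<exists>b\<in>B. \<forall>K\<in>\<K>. b \<in> K)"
  then have "\<forall>b\<in>B. \<exists>K. K \<in> \<K> \<and> b \<notin> K" by blast
  then obtain f where f: "\<forall>b\<in>B. f b \<in> \<K> \<and> b \<notin> f b" by metis
  obtain K where K: "K \<in> \<K>" "\<forall>K'\<in>f ` B. K \<subseteq> K'"
    using filtered_lower[OF assms(1), of "f ` B"] assms(2) f by blast
  obtain b where "b \<in> B" "b \<in> K" using assms(3) K by blast
  then show False using K f by blast
qed

lemma Sstar_J: "S_star_well_filtered SJ"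
  unfolding S_star_well_filtered_def
proof (intro allI impI)
  fix \<K> G U assume a: "\<K> \<subseteq> Kset SJ \<and> filtered_family \<K> \<and> G \<in> Kset SJ \<and> openin SJ U \<and> U \<noteq> {} \<and> \<Inter> \<K> \<inter> G \<subseteq> U"
  show "\<exists>K\<in>\<K>. K \<inter> G \<subseteq> U"
  proof (rule ccontr)
    assume no: "\<not> (\<exists>K\<in>\<K>. K \<inter> G \<subseteq> U)"
    have oU: "openin SJ U" and Une: "U \<noteq> {}" using a by auto
    have upK: "y \<in> K" if "K \<in> \<K>" "x \<in> K" "J_le x y" for K x y
    proof -
      have "K \<in> Kset SJ" using a that(1) by blast
      then have "\<forall>x y. x \<in> K \<and> J_le x y \<longrightarrow> y \<in> K" unfolding Kset_J by blast
      then show ?thesis using that(2,3) by blast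
    qed
    have GK: "G \<in> Kset SJ" using a by blast
    then have upG': "\<forall>x y. x \<in> G \<and> J_le x y \<longrightarrow> y \<in> G" and fG: "finite (finc G)"
      unfolding Kset_J by blast+
    have upG: "y \<in> G" if "x \<in> G" "J_le x y" for x y using upG' that by blast
    obtain n0 where n0: "\<forall>m\<ge>n0. (m,\<infinity>) \<in> U" using oU Une by (rule open_ne_max)
    define c where "c j = (SOME k. (j, enat k) \<in> U)" for j
    have cU: "(j, enat (c j)) \<in> U" if "(j,\<infinity>) \<in> U" for j
    proof -
      have "\<exists>k. (j, enat k) \<in> U" using that oU unfolding open_J by blast
      then show ?thesis unfolding c_def by (rule someI_ex)
    qed
    define B where "B = {p\<in>G. p \<notin> U \<and> (snd p = \<infinity> \<or> (fst p, \<infinity>) \<in> U)}"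
    have "B \<subseteq> (\<lambda>m. (m,\<infinity>)) ` {..<n0} \<union> (\<Union>j\<in>finc G. (\<lambda>k. (j, enat k)) ` {..<c j})"
    proof
      fix p assume pB: "p \<in> B"
      obtain j b where p: "p = (j,b)" by fastforce
      show "p \<in> (\<lambda>m. (m,\<infinity>)) ` {..<n0} \<union> (\<Union>j\<in>finc G. (\<lambda>k. (j, enat k)) ` {..<c j})"
      proof (cases b)
        case infinity
        have "j < n0"
        proof (rule ccontr)
          assume "\<not> j < n0"
          then have "(j,\<infinity>) \<in> U" using n0 by simp
          then show False using pB p infinity unfolding B_def by auto
        qed
        then show ?thesis using p infinity by blast
      next
        case (enat k)
        then have jG: "j \<in> finc G" using pB p unfolding B_def finc_def by auto
        have jU: "(j,\<infinity>) \<in> U" "p \<notin> U" using pB p enat unfolding B_def by auto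
        have "k < c j"
        proof (rule ccontr)
          assume "\<not> k < c j"
          then have "J_le (j, enat (c j)) p" using p enat by simp
          then show False using open_upper[OF oU cU[OF jU(1)]] jU(2) by blast
        qed
        then show ?thesis using jG p enat by blast
      qed
    qed
    moreover have "finite ((\<lambda>m. (m,\<infinity>)) ` {..<n0} \<union> (\<Union>j\<in>finc G. (\<lambda>k. (j, enat k)) ` {..<c j}))"
      using fG by simp
    ultimately have fB: "finite B" using finite_subset by blast
    have meet: "\<forall>K\<in>\<K>. \<exists>b\<in>B. b \<in> K"
    proof
      fix K assume K: "K \<in> \<K>"
      then obtain p where p: "p \<in> K" "p \<in> G" "p \<notin> U" using no by blast
      show "\<exists>b\<in>B. b \<in> K"
      proof (cases "snd p = \<infinity> \<or> (fst p, \<infinity>) \<in> U")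
        case True then show ?thesis using p unfolding B_def by blast
      next
        case False
        have "J_le p (fst p, \<infinity>)" by (cases p) auto
        then have "(fst p, \<infinity>) \<in> K" "(fst p, \<infinity>) \<in> G" using upK[OF K p(1)] upG[OF p(2)] by auto
        then show ?thesis using False unfolding B_def by auto
      qed
    qed
    have filt: "filtered_family \<K>" using a by blast
    obtain b where b: "b \<in> B" "\<forall>K\<in>\<K>. b \<in> K" using filtered_finite_meet[OF filt fB meet] by blast
    then have "b \<in> \<Inter>\<K> \<inter> G" unfolding B_def by blast
    then show False using a b(1) unfolding B_def by blast
  qed
qed

lemma upset_point: "upset SJ {p} = {y. J_le p y}"
  unfolding upset_J by simp

lemma no_meet: "(\<Inter>k. {y. J_le (0, enat k) y}) \<inter> {y. J_le (1, enat 1) y} = {}"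
proof -
  have False if "\<forall>k. J_le (0, enat k) y" "J_le (1, enat 1) y" for y
  proof -
    obtain m n where y: "y = (m,n)" by fastforce
    have "J_le (0, enat (Suc m)) y" using that by blast
    then have "m = 0" using y by auto
    then show False using that(2) y by (cases n) auto
  qed
  then show ?thesis by blast
qed

lemma some_meet: "(Suc k, \<infinity>) \<in> {y. J_le (0, enat k) y} \<inter> {y. J_le (1, enat 1) y}"
  by simp

lemma not_strong_d: "\<not> strong_d_space SJ"
  unfolding strong_d_space_def
proof
  assume h: "\<forall>D x U. D \<subseteq> topspace SJ \<and> directed_rel (spec_le SJ) D \<and> x \<in> topspace SJ \<and>
        openin SJ U \<and> (\<Inter>d\<in>D. upset SJ {d}) \<inter> upset SJ {x} \<subseteq> U \<longrightarrow>
        (\<exists>d\<in>D. upset SJ {d} \<inter> upset SJ {x} \<subseteq> U)"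
  have "(\<Inter>d\<in>range (\<lambda>k. (0::nat, enat k)). upset SJ {d}) = (\<Inter>k. {y. J_le (0, enat k) y})"
    unfolding upset_point by auto
  then have "(\<Inter>d\<in>range (\<lambda>k. (0::nat, enat k)). upset SJ {d}) \<inter> upset SJ {(1, enat 1)} \<subseteq> {}"
    using no_meet unfolding upset_point by simp
  moreover have "openin SJ {}" by simp
  ultimately have "\<exists>d\<in>range (\<lambda>k. (0::nat, enat k)). upset SJ {d} \<inter> upset SJ {(1, enat 1)} \<subseteq> {}"
    using h[rule_format, of "range (\<lambda>k. (0::nat, enat k))" "(1, enat 1)" "{}"] col_dir[of 0]
    unfolding spec_J topspace_scott by blast
  then obtain k where "upset SJ {(0, enat k)} \<inter> upset SJ {(1, enat 1)} \<subseteq> {}" by blast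
  then show False using some_meet[of k] unfolding upset_point by blast
qed

lemma up_Kset: "{y. J_le p y} \<in> Kset SJ"
  unfolding Kset_J
proof (intro conjI allI impI)
  show "{y. J_le p y} \<noteq> {}" using J_refl by blast
  show "\<And>x y. x \<in> {y. J_le p y} \<and> J_le x y \<Longrightarrow> y \<in> {y. J_le p y}"
    using J_trans[of p] by blast
  have "finc {y. J_le p y} \<subseteq> {fst p}" unfolding finc_def using J_fin by blast
  then show "finite (finc {y. J_le p y})" using finite_subset by blast
qed

lemma not_swf: "\<not> strongly_well_filtered SJ"
  unfolding strongly_well_filtered_def
proof
  assume h: "\<forall>\<K> G U. \<K> \<subseteq> Kset SJ \<and> filtered_family \<K> \<and> G \<in> Kset SJ \<and> openin SJ U \<and>
        \<Inter> \<K> \<inter> G \<subseteq> U \<longrightarrow> (\<exists>K\<in>\<K>. K \<inter> G \<subseteq> U)"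
  define \<K> where "\<K> = range (\<lambda>k. {y. J_le (0::nat, enat k) y})"
  have "\<K> \<subseteq> Kset SJ" unfolding \<K>_def using up_Kset by blast
  moreover have "filtered_family \<K>" unfolding filtered_family_def \<K>_def
  proof (intro conjI ballI)
    fix K1 K2 assume "K1 \<in> range (\<lambda>k. {y. J_le (0::nat, enat k) y})" "K2 \<in> range (\<lambda>k. {y. J_le (0::nat, enat k) y})"
    then obtain a b where ab: "K1 = {y. J_le (0::nat, enat a) y}" "K2 = {y. J_le (0::nat, enat b) y}" by blast
    have "{y. J_le (0::nat, enat (max a b)) y} \<subseteq> K1 \<inter> K2"
      unfolding ab using J_trans[of "(0, enat a)" "(0, enat (max a b))"] J_trans[of "(0, enat b)" "(0, enat (max a b))"]
      by auto
    then show "\<exists>K3\<in>range (\<lambda>k. {y. J_le (0::nat, enat k) y}). K3 \<subseteq> K1 \<inter> K2" by blast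
  qed simp
  moreover have "\<Inter>\<K> \<inter> {y. J_le (1, enat 1) y} \<subseteq> {}" unfolding \<K>_def using no_meet by simp
  ultimately have "\<exists>K\<in>\<K>. K \<inter> {y. J_le (1, enat 1) y} \<subseteq> {}"
    using h[rule_format, of \<K> "{y. J_le (1, enat 1) y}" "{}"] up_Kset by simp
  then show False unfolding \<K>_def using some_meet by blast
qed

theorem mainTheorem13:
  shows "is_dcpo J_le
    \<and> coherent_space (scott_topology J_le)
    \<and> S_star_well_filtered (scott_topology J_le)
    \<and> \<not> strong_d_space (scott_topology J_le)
    \<and> \<not> strongly_well_filtered (scott_topology J_le)"
  using dcpo_J coherent_J Sstar_J not_strong_d not_swf by blast

end
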